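(* Let $f\in R$ with $0\le f\le b\cdot1$ and let $0=s_0<s_1<\dots<s_n=b$ be rationals. Then $$\sum_{i=0}^{n-1}s_i\,(s_i<f<s_{i+1})\;\le\; f\;\le\;\sum_{i=0}^{n-1}s_{i+1}\,(s_i\le f\le s_{i+1}),$$ where $(s_i<f<s_{i+1}):=D(f-s_i)\wedge D(s_{i+1}-f)$ and $(s_i\le f\le s_{i+1}):=(f\ge s_i)\wedge(f\le s_{i+1})$.
   Context: $R$ is a Riesz space over $\mathbb{Q}$ with strong unit $1$; rationals $r$ are identified with $r\cdot1$. $\mathrm{Spec}(R)$ is the distributive lattice generated by $D(a)$, $a\in R$, subject to $D(1)=1$; $D(a)\wedge D(-a)=0$; $D(a+b)\le D(a)\vee D(b)$; $D(a)=0$ if $a\le0$; $D(a\vee b)=D(a)\vee D(b)$. $B$ is the Boolean algebra freely generated by $\mathrm{Spec}(R)$; $(f>r):=D(f-r)$, $(f<r):=D(r-f)$, $(f\le r):=\neg(f>r)$, $(f\ge r):=\neg(f<r)$. A positive simple function is a formal finite sum $\sum_i r_ix_i$ with rationals $r_i\ge0$, $x_i\in B$; for a finite index set $I$, $x_I:=\bigwedge_{i\in I}x_i$ ($x_\emptyset=1$), $r_I:=\sum_{i\in I}r_i$ ($r_\emptyset=0$). For $f\in R$: $\sum_ir_ix_i\le f$ iff $x_I\le(f\ge r_I)$ for every finite index set $I$; $f\le\sum_js_jy_j$ iff $1=\bigvee_J((f\le s_J)\wedge y_J)$, the join over all finite index sets $J$. *)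

theory Defs
  imports Main "HOL-Library.Lattice_Algebras"
begin

definition riesz_space_Q :: "(rat \<Rightarrow> 'r::lattice_ab_group_add \<Rightarrow> 'r) \<Rightarrow> bool" where
  "riesz_space_Q scale \<longleftrightarrow> vector_space scale \<and>
     (\<forall>q x. 0 \<le> q \<longrightarrow> 0 \<le> x \<longrightarrow> 0 \<le> scale q x)"

definition strong_unit :: "(rat \<Rightarrow> 'r::lattice_ab_group_add \<Rightarrow> 'r) \<Rightarrow> 'r \<Rightarrow> bool" where
  "strong_unit scale u \<longleftrightarrow> 0 \<le> u \<and> (\<forall>a. \<exists>n::nat. sup a (- a) \<le> scale (of_nat n) u)"

text \<open>D is an interpretation of the generators D(a) of Spec(R) in a Boolean algebra
  satisfying the defining relations of Spec(R).  Inequalities between Boolean terms in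
  the generators hold in B (the free Boolean algebra over Spec(R)) iff they hold for
  every such interpretation.\<close>
definition spec_rel :: "(rat \<Rightarrow> 'r::lattice_ab_group_add \<Rightarrow> 'r) \<Rightarrow> 'r \<Rightarrow> ('r \<Rightarrow> 'b::boolean_algebra) \<Rightarrow> bool" where
  "spec_rel scale u D \<longleftrightarrow>
     D u = top \<and>
     (\<forall>a. inf (D a) (D (- a)) = bot) \<and>
     (\<forall>a b. D (a + b) \<le> sup (D a) (D b)) \<and>
     (\<forall>a. a \<le> 0 \<longrightarrow> D a = bot) \<and>
     (\<forall>a b. D (sup a b) = sup (D a) (D b))"

text \<open>(f > r), (f < r), (f \<le> r), (f \<ge> r), rationals r identified with r\<cdot>u.\<close>
definition fgt :: "(rat \<Rightarrow> 'r::lattice_ab_group_add \<Rightarrow> 'r) \<Rightarrow> 'r \<Rightarrow> ('r \<Rightarrow> 'b::boolean_algebra) \<Rightarrow> 'r \<Rightarrow> rat \<Rightarrow> 'b" where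
  "fgt scale u D f r = D (f - scale r u)"
definition flt :: "(rat \<Rightarrow> 'r::lattice_ab_group_add \<Rightarrow> 'r) \<Rightarrow> 'r \<Rightarrow> ('r \<Rightarrow> 'b::boolean_algebra) \<Rightarrow> 'r \<Rightarrow> rat \<Rightarrow> 'b" where
  "flt scale u D f r = D (scale r u - f)"
definition fle :: "(rat \<Rightarrow> 'r::lattice_ab_group_add \<Rightarrow> 'r) \<Rightarrow> 'r \<Rightarrow> ('r \<Rightarrow> 'b::boolean_algebra) \<Rightarrow> 'r \<Rightarrow> rat \<Rightarrow> 'b" where
  "fle scale u D f r = - fgt scale u D f r"
definition fge :: "(rat \<Rightarrow> 'r::lattice_ab_group_add \<Rightarrow> 'r) \<Rightarrow> 'r \<Rightarrow> ('r \<Rightarrow> 'b::boolean_algebra) \<Rightarrow> 'r \<Rightarrow> rat \<Rightarrow> 'b" where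
  "fge scale u D f r = - flt scale u D f r"

text \<open>x_I := meet of x_i over i in I (empty meet = top).\<close>
definition bmeet :: "('i \<Rightarrow> 'b::boolean_algebra) \<Rightarrow> 'i set \<Rightarrow> 'b" where
  "bmeet x I = Inf_fin (insert top (x ` I))"

text \<open>Positive simple function with index set Ix, coefficients r and elements x:
  sum_i r_i x_i \<le> f.\<close>
definition simple_le_elem :: "(rat \<Rightarrow> 'r::lattice_ab_group_add \<Rightarrow> 'r) \<Rightarrow> 'r \<Rightarrow> ('r \<Rightarrow> 'b::boolean_algebra)
    \<Rightarrow> 'i set \<Rightarrow> ('i \<Rightarrow> rat) \<Rightarrow> ('i \<Rightarrow> 'b) \<Rightarrow> 'r \<Rightarrow> bool" where
  "simple_le_elem scale u D Ix r x f \<longleftrightarrow>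
     (\<forall>I. I \<subseteq> Ix \<longrightarrow> bmeet x I \<le> fge scale u D f (sum r I))"

text \<open>f \<le> sum_j s_j y_j.\<close>
definition elem_le_simple :: "(rat \<Rightarrow> 'r::lattice_ab_group_add \<Rightarrow> 'r) \<Rightarrow> 'r \<Rightarrow> ('r \<Rightarrow> 'b::boolean_algebra)
    \<Rightarrow> 'r \<Rightarrow> 'i set \<Rightarrow> ('i \<Rightarrow> rat) \<Rightarrow> ('i \<Rightarrow> 'b) \<Rightarrow> bool" where
  "elem_le_simple scale u D f Ix s y \<longleftrightarrow>
     top = Sup_fin ((\<lambda>J. inf (fle scale u D f (sum s J)) (bmeet y J)) ` Pow Ix)"

end

theory Submission
  imports Defs
begin

lemma scale_diff_u:
  assumes "riesz_space_Q scale"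
  shows "scale a u - scale c u = scale (a - c) (u::'r::lattice_ab_group_add)"
proof -
  from assms have "vector_space scale" by (simp add: riesz_space_Q_def)
  then interpret vector_space scale .
  show ?thesis by (rule scale_left_diff_distrib[symmetric])
qed

lemma scale_zero_u:
  assumes "riesz_space_Q scale"
  shows "scale 0 (u::'r::lattice_ab_group_add) = 0"
proof -
  from assms have "vector_space scale" by (simp add: riesz_space_Q_def)
  then interpret vector_space scale .
  show ?thesis by simp
qed

lemma scale_mono_u:
  assumes "riesz_space_Q scale" "0 \<le> u" "a \<le> c"
  shows "scale a u \<le> scale c (u::'r::lattice_ab_group_add)"
proof -
  have "0 \<le> scale (c - a) u" using assms by (simp add: riesz_space_Q_def)
  then have "0 \<le> scale c u - scale a u" using scale_diff_u[OF assms(1)] by simp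
  then show ?thesis by simp
qed

lemma key_disj:
  assumes R: "riesz_space_Q scale" and U: "0 \<le> u" and S: "spec_rel scale u D" and ac: "a \<le> c"
  shows "inf (D (scale a u - f)) (D (f - scale c u)) = (bot::'b::boolean_algebra)"
proof -
  have e: "scale a u - f = (scale a u - scale c u) + (scale c u - f)" by (simp add: algebra_simps)
  have "scale a u - scale c u \<le> 0" using scale_mono_u[OF R U ac] by simp
  then have z: "D (scale a u - scale c u) = bot" using S by (simp add: spec_rel_def)
  have "D (scale a u - f) \<le> sup (D (scale a u - scale c u)) (D (scale c u - f))"
    using S unfolding spec_rel_def e by blast
  then have l: "D (scale a u - f) \<le> D (scale c u - f)" using z by simp
  have "inf (D (f - scale c u)) (D (- (f - scale c u))) = bot" using S unfolding spec_rel_def by blast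
  then have "inf (D (scale c u - f)) (D (f - scale c u)) = bot" by (simp add: inf_commute)
  then show ?thesis using l by (metis inf_mono bot_unique order_refl)
qed

lemma D_neg':
  assumes S: "spec_rel scale u D"
  shows "D (scale a u - f) \<le> - D (f - scale a u)"
proof -
  have "inf (D (f - scale a u)) (D (- (f - scale a u))) = bot" using S unfolding spec_rel_def by blast
  then have "inf (D (scale a u - f)) (D (f - scale a u)) = bot" by (simp add: inf_commute)
  then show ?thesis by (metis inf_le2 inf_sup_distrib1 inf_top_right sup_bot_left sup_compl_top)
qed

lemma s_mono:
  assumes "\<forall>i<n. (s::nat\<Rightarrow>rat) i < s (Suc i)" "i \<le> j" "j \<le> n"
  shows "s i \<le> s j"
  using assms(2,3)
proof (induction j)
  case 0 then show ?case by simp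
next
  case (Suc j)
  show ?case
  proof (cases "i = Suc j")
    case True then show ?thesis by simp
  next
    case False
    then have "s i \<le> s j" using Suc by simp
    also have "\<dots> \<le> s (Suc j)" using assms(1) Suc.prems by (simp add: less_imp_le)
    finally show ?thesis .
  qed
qed

lemma bool_split_le: "(x::'b::boolean_algebra) \<le> sup (inf (- a) x) a"
proof -
  have "sup (inf (- a) x) a = inf (sup (- a) a) (sup x a)" by (simp add: sup_inf_distrib2)
  also have "\<dots> = sup x a" by simp
  finally show ?thesis by simp
qed

lemma bmeet_empty: "bmeet x {} = top"
  by (simp add: bmeet_def)

lemma bmeet_single: "bmeet x {i} = x i"
  by (simp add: bmeet_def)

lemma bmeet_le: "finite I \<Longrightarrow> i \<in> I \<Longrightarrow> bmeet x I \<le> x i"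
  unfolding bmeet_def by (rule Inf_fin.coboundedI) auto

theorem lemma4p8:
  fixes scale :: "rat \<Rightarrow> 'r::lattice_ab_group_add \<Rightarrow> 'r"
    and u :: 'r and D :: "'r \<Rightarrow> 'b::boolean_algebra"
    and f :: 'r and b :: rat and s :: "nat \<Rightarrow> rat" and n :: nat
  assumes "riesz_space_Q scale" and "strong_unit scale u" and "spec_rel scale u D"
    and "0 \<le> f" and "f \<le> scale b u"
    and "s 0 = 0" and "\<forall>i<n. s i < s (Suc i)" and "s n = b"
  shows "simple_le_elem scale u D {..<n} s
           (\<lambda>i. inf (fgt scale u D f (s i)) (flt scale u D f (s (Suc i)))) f
       \<and> elem_le_simple scale u D f {..<n} (\<lambda>i. s (Suc i))
           (\<lambda>i. inf (fge scale u D f (s i)) (fle scale u D f (s (Suc i))))"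
proof
  note R = assms(1) and S = assms(3)
  have U: "0 \<le> u" using assms(2) by (simp add: strong_unit_def)
  define x where "x = (\<lambda>i. inf (fgt scale u D f (s i)) (flt scale u D f (s (Suc i))))"
  show "simple_le_elem scale u D {..<n} s
           (\<lambda>i. inf (fgt scale u D f (s i)) (flt scale u D f (s (Suc i)))) f"
    unfolding simple_le_elem_def x_def[symmetric]
  proof (intro allI impI)
    fix I assume I: "I \<subseteq> {..<n}"
    then have fI: "finite I" using finite_subset by blast
    show "bmeet x I \<le> fge scale u D f (sum s I)"
    proof (cases "\<exists>i j. i \<in> I \<and> j \<in> I \<and> i < j")
      case True
      then obtain i j where ij: "i \<in> I" "j \<in> I" "i < j" by blast
      have "s (Suc i) \<le> s j" using s_mono[OF assms(7)] ij I by auto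
      then have bot: "inf (D (scale (s (Suc i)) u - f)) (D (f - scale (s j) u)) = bot"
        by (rule key_disj[OF R U S])
      have "bmeet x I \<le> inf (x i) (x j)" using bmeet_le[OF fI, of i x] bmeet_le[OF fI, of j x] ij by simp
      also have "\<dots> \<le> inf (D (scale (s (Suc i)) u - f)) (D (f - scale (s j) u))"
        unfolding x_def fgt_def flt_def by (simp add: le_infI1 le_infI2 inf.coboundedI1 inf.coboundedI2)
      finally show ?thesis using bot by (metis bot.extremum_uniqueI bot_least)
    next
      case False
      then have "I = {} \<or> (\<exists>i. I = {i})"
        by (metis all_not_in_conv insertI1 linorder_neqE_nat singleton_iff subsetI subset_singletonD)
      then show ?thesis
      proof
        assume "I = {}"
        have "- f \<le> 0" using assms(4) by simp
        then have "D (- f) = bot" using S by (simp add: spec_rel_def)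
        then show ?thesis using \<open>I = {}\<close>
          by (simp add: bmeet_empty fge_def flt_def scale_zero_u[OF R])
      next
        assume "\<exists>i. I = {i}"
        then obtain i where "I = {i}" by blast
        then show ?thesis
          using compl_le_swap1[OF D_neg'[OF S, of "s i" f]]
          by (simp add: bmeet_single x_def fge_def flt_def fgt_def le_infI1)
      qed
    qed
  qed
  define y where "y = (\<lambda>i. inf (fge scale u D f (s i)) (fle scale u D f (s (Suc i))))"
  define Sset where "Sset = (\<lambda>J. inf (fle scale u D f (sum (\<lambda>i. s (Suc i)) J)) (bmeet y J)) ` Pow {..<n}"
  have fS: "finite Sset" unfolding Sset_def by simp
  have step: "k \<le> n \<Longrightarrow> fle scale u D f (s k) \<le> Sup_fin Sset" for k
  proof (induction k)
    case 0
    have "fle scale u D f (s 0) \<in> Sset" unfolding Sset_def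
      by (rule image_eqI[of _ _ "{}"]) (auto simp: bmeet_empty assms(6))
    then show ?case by (rule Sup_fin.coboundedI[OF fS])
  next
    case (Suc k)
    have kn: "k < n" using Suc.prems by simp
    have T: "y k \<in> Sset" unfolding Sset_def
      by (rule image_eqI[of _ _ "{k}"]) (auto simp: bmeet_single kn y_def inf_aci)
    let ?a = "flt scale u D f (s k)"
    have a_le: "?a \<le> fle scale u D f (s k)"
      using D_neg'[OF S, of "s k" f] by (simp add: flt_def fle_def fgt_def)
    have "fle scale u D f (s (Suc k)) \<le> sup (y k) ?a"
      unfolding y_def fge_def
      by (rule bool_split_le)
    also have "\<dots> \<le> sup (y k) (fle scale u D f (s k))" using a_le by (rule sup_mono[OF order_refl])
    also have "\<dots> \<le> Sup_fin Sset"
      using Sup_fin.coboundedI[OF fS T] Suc.IH kn by simp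
    finally show ?case .
  qed
  have "fle scale u D f (s n) = top"
  proof -
    have "f - scale b u \<le> 0" using assms(5) by simp
    then show ?thesis using S assms(8) by (simp add: fle_def fgt_def spec_rel_def)
  qed
  then have "top \<le> Sup_fin Sset" using step[of n] by simp
  then show "elem_le_simple scale u D f {..<n} (\<lambda>i. s (Suc i))
           (\<lambda>i. inf (fge scale u D f (s i)) (fle scale u D f (s (Suc i))))"
    unfolding elem_le_simple_def y_def[symmetric] Sset_def[symmetric] by (simp add: top_unique)
qed

end
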